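(* Let $\theta_N=1+N^{-2/3}w_N$ with $w_N>0$, $(\log\log N)^2/w_N\to0$ and $w_N/(\log N)^2\to0$. For $1\le i\le N$ let $r_i=1+\sqrt{1-\frac{i-1}{N\theta_N^2}}$, $m_i=1-\sqrt{1-\frac{i-1}{N\theta_N^2}}$, $\gamma_i=m_i/r_i$; for $2\le i\le N$ let $\delta_i=\frac{m_i}{r_i}-\frac{m_i}{r_{i-1}}$, and for $3\le i\le N$ let \[ T_{\delta i}=\delta_i+\gamma_i\delta_{i-1}+\gamma_i\gamma_{i-1}\delta_{i-2}+\dots+\gamma_i\gamma_{i-1}\cdots\gamma_4\delta_3. \] Then, for large enough $N$, \[ \sum_{i=3}^NT_{\delta i}=\frac16\log N+O(\log\log N). \] *)

theory Defs
  imports "HOL-Analysis.Analysis" "HOL-Library.Landau_Symbols"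
begin

definition theta :: "(nat \<Rightarrow> real) \<Rightarrow> nat \<Rightarrow> real" where
  "theta w N = 1 + real N powr (-2/3) * w N"

definition rr :: "(nat \<Rightarrow> real) \<Rightarrow> nat \<Rightarrow> nat \<Rightarrow> real" where
  "rr w N i = 1 + sqrt (1 - (real i - 1) / (real N * (theta w N)^2))"

definition mm :: "(nat \<Rightarrow> real) \<Rightarrow> nat \<Rightarrow> nat \<Rightarrow> real" where
  "mm w N i = 1 - sqrt (1 - (real i - 1) / (real N * (theta w N)^2))"

definition gam :: "(nat \<Rightarrow> real) \<Rightarrow> nat \<Rightarrow> nat \<Rightarrow> real" where
  "gam w N i = mm w N i / rr w N i"

definition delta :: "(nat \<Rightarrow> real) \<Rightarrow> nat \<Rightarrow> nat \<Rightarrow> real" where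
  "delta w N i = mm w N i / rr w N i - mm w N i / rr w N (i - 1)"

definition Tdelta :: "(nat \<Rightarrow> real) \<Rightarrow> nat \<Rightarrow> nat \<Rightarrow> real" where
  "Tdelta w N i = (\<Sum>j=3..i. (\<Prod>k=j+1..i. gam w N k) * delta w N j)"

end

theory Submission
  imports Defs
begin

lemma core_eq:
  fixes a b c :: real
  assumes "0<b" "b\<le>a" "a \<le> 1" "c>0" "c*(a-b)*(a+b) = 1"
  shows "(1-b)/(1+b) - (1-b)/(1+a) = (1 - (1-b)/(1+b)) * ((1-b)/(2*c*b*(1+a)*(a+b)))"
proof -
  have "(1-b)/(1+b) - (1-b)/(1+a) = (1-b)*(a-b)/((1+a)*(1+b))" using assms by (simp add: field_simps)
  also have "a - b = 1/(c*(a+b))" using assms by (simp add: eq_divide_eq mult.commute mult.left_commute)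
  finally have l: "(1-b)/(1+b) - (1-b)/(1+a) = (1-b)/(c*(a+b)*(1+a)*(1+b))" using assms(1-4) by simp
  have "1 - (1-b)/(1+b) = 2*b/(1+b)" using assms by (simp add: field_simps)
  hence "(1 - (1-b)/(1+b)) * ((1-b)/(2*c*b*(1+a)*(a+b))) = (2*b*(1-b))/((1+b)*(2*c*b*(1+a)*(a+b)))"
    by simp
  also have "... = (1-b)/(c*(a+b)*(1+a)*(1+b))"
  proof -
    have p1: "0 < (1+b)*(2*c*b*(1+a)*(a+b))" using assms(1-4) by (intro mult_pos_pos) auto
    have p2: "0 < c*(a+b)*(1+a)*(1+b)" using assms(1-4) by (intro mult_pos_pos) auto
    show ?thesis using p1 p2 by (subst frac_eq_eq) (auto simp: algebra_simps)
  qed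
  finally have "(1 - (1-b)/(1+b)) * ((1-b)/(2*c*b*(1+a)*(a+b))) = (1-b)/(c*(a+b)*(1+a)*(1+b))" .
  with l show ?thesis by simp
qed

lemma core_upper:
  fixes a b c :: real
  assumes "0<b" "b\<le>a" "a \<le> 1" "c>0"
  shows "(1-b)/(2*c*b*(1+a)*(a+b)) \<le> 1/(4*c*b^2)"
proof -
  have "(1-b)*(4*c*b^2) \<le> 1*(2*c*b*(1+a)*(a+b))"
  proof -
    have "(1-b)*(2*b) \<le> 2*b" using assms by (simp add: mult_le_cancel_right1)
    also have "2*b \<le> 1*(a+b)" using assms by simp
    also have "... \<le> (1+a)*(a+b)" using assms by (intro mult_right_mono) auto
    finally have "(1-b)*(2*b) \<le> (1+a)*(a+b)" .
    hence "(2*c*b)*((1-b)*(2*b)) \<le> (2*c*b)*((1+a)*(a+b))" using assms by (intro mult_left_mono) auto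
    thus ?thesis by (simp add: algebra_simps power2_eq_square)
  qed
  hence "(1-b) \<le> (2*c*b*(1+a)*(a+b)) / (4*c*b^2)" using assms by (intro mult_imp_le_div_pos) auto
  hence "(1-b) \<le> (1/(4*c*b^2)) * (2*c*b*(1+a)*(a+b))" by simp
  thus ?thesis using assms by (intro mult_imp_div_pos_le) auto
qed

lemma core_lower:
  fixes a b c :: real
  assumes "0<b" "b\<le>a" "a \<le> 1" "c>0" "c*(a-b)*(a+b) = 1"
  shows "1/(4*c*a^2) - (a-b) \<le> (1-b)/(2*c*b*(1+a)*(a+b))"
proof -
  have ab: "a - b = 1/(c*(a+b))" using assms by (simp add: eq_divide_eq mult.commute mult.left_commute)
  have "1/(2*c*a) \<le> 1/(c*(a+b))" using assms by (intro divide_left_mono mult_pos_pos) auto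
  hence e: "1/(2*c*a) \<le> a - b" using ab by simp
  have "(1-a)/(4*c*a^2*(1+a)) \<le> (1-b)/(2*c*b*(1+a)*(a+b))"
  proof (rule frac_le)
    show "0 \<le> 1 - b" using assms by simp
    show "1 - a \<le> 1 - b" using assms by simp
    show "0 < 2*c*b*(1+a)*(a+b)" using assms by simp
    have "2*b*(a+b) \<le> 2*a*(2*a)" using assms by (intro mult_mono) auto
    hence "(2*c*(1+a))*(2*b*(a+b)) \<le> (2*c*(1+a))*(2*a*(2*a))" using assms by (intro mult_left_mono) auto
    thus "2*c*b*(1+a)*(a+b) \<le> 4*c*a^2*(1+a)" by (simp add: algebra_simps power2_eq_square)
  qed
  moreover have "1/(4*c*a^2) - 1/(2*c*a) \<le> (1-a)/(4*c*a^2*(1+a))"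
  proof -
    have "1/(4*c*a^2) - 1/(2*c*a) = (1-2*a)/(4*c*a^2)" using assms by (simp add: field_simps power2_eq_square)
    also have "... \<le> (1-a)/(1+a)/(4*c*a^2)"
    proof (rule divide_right_mono)
      have "(1-2*a)*(1+a) \<le> 1 - a" using assms by (simp add: algebra_simps)
      thus "1 - 2*a \<le> (1-a)/(1+a)" using assms by (simp add: le_divide_eq)
    qed (use assms in auto)
    also have "... = (1-a)/(4*c*a^2*(1+a))" using assms by (simp add: field_simps)
    finally show ?thesis .
  qed
  ultimately show ?thesis using e by linarith
qed

lemma core_mono:
  fixes a b a' b' c :: real
  assumes "0<b" "b\<le>b'" "a \<le> a'" "b \<le> a" "b' \<le> 1" "c>0"
  shows "(1-b')/(2*c*b'*(1+a')*(a'+b')) \<le> (1-b)/(2*c*b*(1+a)*(a+b))"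
proof (rule frac_le)
  show "0 \<le> 1 - b" using assms by simp
  show "1 - b' \<le> 1 - b" using assms by simp
  show "0 < 2*c*b*(1+a)*(a+b)" using assms by simp
  show "2*c*b*(1+a)*(a+b) \<le> 2*c*b'*(1+a')*(a'+b')" using assms
    by (intro mult_mono) auto
qed

definition uu :: "real \<Rightarrow> nat \<Rightarrow> real" where "uu c i = 1 - (real i - 1)/c"
definition rs :: "real \<Rightarrow> nat \<Rightarrow> real" where "rs c i = sqrt (uu c i)"
definition gg :: "real \<Rightarrow> nat \<Rightarrow> real" where "gg c i = (1 - rs c i)/(1 + rs c i)"
definition dd :: "real \<Rightarrow> nat \<Rightarrow> real" where
  "dd c i = (1 - rs c i)/(1 + rs c i) - (1 - rs c i)/(1 + rs c (i-1))"
definition TT :: "real \<Rightarrow> nat \<Rightarrow> real" where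
  "TT c i = (\<Sum>j=3..i. (\<Prod>k=j+1..i. gg c k) * dd c j)"
definition AA :: "real \<Rightarrow> nat \<Rightarrow> real" where
  "AA c i = (1 - rs c i)/(2*c*rs c i*(1+rs c (i-1))*(rs c (i-1)+rs c i))"

lemma tel1: fixes f :: "nat \<Rightarrow> real" and n :: nat shows "3 \<le> n \<Longrightarrow> (\<Sum>j=3..n. (f (j-2) - f (j-1) :: real)) = f 1 - f (n-1)"
proof (induction n rule: nat_induct_at_least)
  case base then show ?case by simp
next
  case (Suc n) then show ?case by (simp add: sum.cl_ivl_Suc)
qed

lemma tel2: fixes f :: "nat \<Rightarrow> real" and n :: nat shows "3 \<le> n \<Longrightarrow> (\<Sum>j=3..n. (f (j-1) - f j :: real)) = f 2 - f n"
proof (induction n rule: nat_induct_at_least)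
  case base then show ?case by simp
next
  case (Suc n) then show ?case by (simp add: sum.cl_ivl_Suc)
qed

lemma tel3: fixes f :: "nat \<Rightarrow> real" and n :: nat shows "3 \<le> n \<Longrightarrow> (\<Sum>j=3..<n. (f j - f (Suc j) :: real)) = f 3 - f n"
proof (induction n rule: nat_induct_at_least)
  case base then show ?case by simp
next
  case (Suc n) then show ?case by simp
qed

context
  fixes c :: real and N :: nat
  assumes N3: "3 \<le> N" and cN: "real N \<le> c"
begin

lemma cpos: "0 < c" using N3 cN by linarith

lemma u_ge: "i \<le> N \<Longrightarrow> 1/c \<le> uu c i"
proof -
  assume "i \<le> N"
  hence "real i - 1 \<le> c - 1" using cN by linarith
  hence "(real i - 1)/c \<le> (c-1)/c" using cpos by (simp add: divide_right_mono)
  also have "(c-1)/c = 1 - 1/c" using cpos by (simp add: field_simps)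
  finally show ?thesis unfolding uu_def by linarith
qed

lemma u_pos: "i \<le> N \<Longrightarrow> 0 < uu c i"
  using u_ge[of i] cpos by (meson less_le_trans zero_less_divide_1_iff)

lemma u_le1: "1 \<le> i \<Longrightarrow> uu c i \<le> 1"
  unfolding uu_def using cpos by simp

lemma u_anti: "i \<le> j \<Longrightarrow> uu c j \<le> uu c i"
  unfolding uu_def using cpos by (simp add: divide_right_mono)

lemma u_step: "2 \<le> j \<Longrightarrow> uu c (j-1) = uu c j + 1/c"
  unfolding uu_def using cpos by (simp add: of_nat_diff field_simps)

lemma s_pos: "i \<le> N \<Longrightarrow> 0 < rs c i"
  unfolding rs_def using u_pos by simp

lemma s_le1: "1 \<le> i \<Longrightarrow> rs c i \<le> 1"
  unfolding rs_def using u_le1 by simp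

lemma s_sq: "i \<le> N \<Longrightarrow> (rs c i)^2 = uu c i"
  unfolding rs_def using u_pos by (simp add: less_imp_le)

lemma s_anti: "i \<le> j \<Longrightarrow> rs c j \<le> rs c i"
  unfolding rs_def using u_anti by simp

lemma s_step: "2 \<le> j \<Longrightarrow> j \<le> N \<Longrightarrow> c*(rs c (j-1) - rs c j)*(rs c (j-1) + rs c j) = 1"
proof -
  assume j: "2 \<le> j" "j \<le> N"
  have "c*(rs c (j-1) - rs c j)*(rs c (j-1) + rs c j) = c*((rs c (j-1))^2 - (rs c j)^2)"
    by (simp add: algebra_simps power2_eq_square)
  also have "... = c*(uu c (j-1) - uu c j)" using j by (simp add: s_sq)
  also have "... = 1" using j u_step cpos by simp
  finally show ?thesis .
qed

lemma dd_eq: "2 \<le> j \<Longrightarrow> j \<le> N \<Longrightarrow> dd c j = (1 - gg c j) * AA c j"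
  unfolding dd_def gg_def AA_def
  by (rule core_eq) (use s_pos s_le1 s_anti s_step cpos in auto)

lemma AA_upper: "2 \<le> j \<Longrightarrow> j \<le> N \<Longrightarrow> AA c j \<le> 1/(4*c*uu c j)"
  unfolding AA_def using core_upper[of "rs c j" "rs c (j-1)" c] s_pos s_le1 s_anti cpos s_sq
  by auto

lemma AA_lower: "2 \<le> j \<Longrightarrow> j \<le> N \<Longrightarrow> 1/(4*c*uu c (j-1)) - (rs c (j-1) - rs c j) \<le> AA c j"
  unfolding AA_def using core_lower[of "rs c j" "rs c (j-1)" c] s_pos s_le1 s_anti cpos s_sq s_step
  by auto

lemma AA_mono: "3 \<le> j \<Longrightarrow> j \<le> N \<Longrightarrow> AA c (j-1) \<le> AA c j"
proof -
  assume j: "3 \<le> j" "j \<le> N"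
  have e: "j - 1 - 1 = j - 2" by simp
  show ?thesis unfolding AA_def e
    by (rule core_mono) (use j s_pos s_le1 s_anti cpos in auto)
qed

lemma AA_nonneg: "2 \<le> j \<Longrightarrow> j \<le> N \<Longrightarrow> 0 \<le> AA c j"
  unfolding AA_def using s_pos s_le1 s_anti cpos
  by (intro divide_nonneg_pos) (auto intro!: mult_pos_pos add_pos_pos)


lemma gg_nonneg: "1 \<le> i \<Longrightarrow> i \<le> N \<Longrightarrow> 0 \<le> gg c i"
  unfolding gg_def using s_pos s_le1 by (simp add: less_imp_le)

lemma gg_le1: "i \<le> N \<Longrightarrow> gg c i \<le> 1"
proof -
  assume "i \<le> N"
  hence p: "0 < rs c i" using s_pos by simp
  thus ?thesis unfolding gg_def by (simp add: divide_le_eq)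
qed

lemma gg_mono: "1 \<le> i \<Longrightarrow> i \<le> N \<Longrightarrow> gg c i \<le> gg c N"
  unfolding gg_def
proof (rule frac_le)
  assume "1 \<le> i" "i \<le> N"
  then show "0 \<le> 1 - rs c N" "1 - rs c i \<le> 1 - rs c N" "0 < 1 + rs c N" "1 + rs c N \<le> 1 + rs c i"
    using s_le1[of N] s_anti[of i N] s_pos[of N] N3 by auto
qed

lemma one_minus_gg: "1 \<le> i \<Longrightarrow> i \<le> N \<Longrightarrow> rs c i \<le> 1 - gg c i"
proof -
  assume i: "1 \<le> i" "i \<le> N"
  have p: "0 < rs c i" "rs c i \<le> 1" using i s_pos s_le1 by auto
  have "1 - gg c i = 2 * rs c i/(1 + rs c i)" unfolding gg_def using p by (simp add: field_simps)
  also have "rs c i \<le> 2 * rs c i/(1 + rs c i)" using p by (simp add: le_divide_eq algebra_simps)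
  finally show ?thesis by simp
qed

lemma TT3: "TT c 3 = dd c 3"
  unfolding TT_def by simp

lemma TT_rec: "3 \<le> n \<Longrightarrow> TT c (Suc n) = dd c (Suc n) + gg c (Suc n) * TT c n"
proof -
  assume n: "3 \<le> n"
  have "TT c (Suc n) = (\<Sum>j=3..n. (\<Prod>k=j+1..Suc n. gg c k) * dd c j) + dd c (Suc n)"
    unfolding TT_def using n by (simp add: sum.cl_ivl_Suc)
  also have "(\<Sum>j=3..n. (\<Prod>k=j+1..Suc n. gg c k) * dd c j) = (\<Sum>j=3..n. gg c (Suc n) * ((\<Prod>k=j+1..n. gg c k) * dd c j))"
    by (rule sum.cong) (auto simp: prod.cl_ivl_Suc)
  also have "... = gg c (Suc n) * TT c n" unfolding TT_def by (simp add: sum_distrib_left)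
  finally show ?thesis by simp
qed

lemma T_le_A: "3 \<le> i \<Longrightarrow> i \<le> N \<Longrightarrow> TT c i \<le> AA c i"
proof (induction i rule: nat_induct_at_least)
  case base
  have "TT c 3 = (1 - gg c 3) * AA c 3" using TT3 dd_eq[of 3] N3 by simp
  also have "... = AA c 3 - gg c 3 * AA c 3" by (simp add: algebra_simps)
  also have "... \<le> AA c 3" using gg_nonneg[of 3] AA_nonneg[of 3] N3 by simp
  finally show ?case .
next
  case (Suc n)
  have "TT c (Suc n) = dd c (Suc n) + gg c (Suc n) * TT c n" using TT_rec Suc by simp
  also have "... \<le> dd c (Suc n) + gg c (Suc n) * AA c n"
    using Suc gg_nonneg[of "Suc n"] by (simp add: mult_left_mono)
  also have "... \<le> dd c (Suc n) + gg c (Suc n) * AA c (Suc n)"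
    using Suc gg_nonneg[of "Suc n"] AA_mono[of "Suc n"] by (simp add: mult_left_mono)
  also have "... = AA c (Suc n)" using dd_eq[of "Suc n"] Suc by (simp add: algebra_simps)
  finally show ?case .
qed

lemma F_sum_aux: "3 \<le> m \<Longrightarrow> m \<le> N \<Longrightarrow>
  (\<Sum>i=3..m. AA c i - TT c i) \<le> gg c N * (\<Sum>i=3..m-1. AA c i - TT c i) + AA c m"
proof (induction m rule: nat_induct_at_least)
  case base
  have "TT c 3 = (1 - gg c 3) * AA c 3" using TT3 dd_eq[of 3] N3 by simp
  hence "AA c 3 - TT c 3 = gg c 3 * AA c 3" by (simp add: algebra_simps)
  also have "... \<le> AA c 3" using gg_le1[of 3] gg_nonneg[of 3] AA_nonneg[of 3] N3 by (intro mult_left_le_one_le) auto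
  finally show ?case by simp
next
  case (Suc n)
  let ?g = "gg c (Suc n)"
  have F: "AA c (Suc n) - TT c (Suc n) = ?g * (AA c n - TT c n) + ?g * (AA c (Suc n) - AA c n)"
    using TT_rec[of n] dd_eq[of "Suc n"] Suc by (simp add: algebra_simps)
  have "?g * (AA c n - TT c n) \<le> gg c N * (AA c n - TT c n)"
  proof (rule mult_right_mono)
    show "?g \<le> gg c N" using gg_mono[of "Suc n"] Suc by simp
    show "0 \<le> AA c n - TT c n" using T_le_A[of n] Suc by simp
  qed
  moreover have "?g * (AA c (Suc n) - AA c n) \<le> AA c (Suc n) - AA c n"
    using gg_le1[of "Suc n"] gg_nonneg[of "Suc n"] AA_mono[of "Suc n"] Suc by (intro mult_left_le_one_le) auto
  ultimately have F2: "AA c (Suc n) - TT c (Suc n) \<le> gg c N * (AA c n - TT c n) + (AA c (Suc n) - AA c n)"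
    using F by linarith
  have IH: "(\<Sum>i=3..n. AA c i - TT c i) \<le> gg c N * (\<Sum>i=3..n-1. AA c i - TT c i) + AA c n"
    using Suc by simp
  have s1: "(\<Sum>i=3..Suc n. AA c i - TT c i) = (\<Sum>i=3..n. AA c i - TT c i) + (AA c (Suc n) - TT c (Suc n))"
    using Suc by (simp add: sum.cl_ivl_Suc)
  have s2: "(\<Sum>i=3..n. AA c i - TT c i) = (\<Sum>i=3..n-1. AA c i - TT c i) + (AA c n - TT c n)"
  proof -
    obtain k where k: "n = Suc k" using Suc by (cases n) auto
    show ?thesis unfolding k using Suc k by (simp add: sum.cl_ivl_Suc)
  qed
  have s3: "gg c N * (\<Sum>i=3..n. AA c i - TT c i) = gg c N * (\<Sum>i=3..n-1. AA c i - TT c i) + gg c N * (AA c n - TT c n)"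
    unfolding s2 by (simp add: distrib_left)
  have "(\<Sum>i=3..Suc n. AA c i - TT c i) \<le> gg c N * (\<Sum>i=3..n. AA c i - TT c i) + AA c (Suc n)"
    unfolding s1 using IH F2 s3 by linarith
  thus ?case by simp
qed

lemma F_sum: "(\<Sum>i=3..N. AA c i - TT c i) \<le> AA c N / (1 - gg c N)"
proof -
  have "(\<Sum>i=3..N. AA c i - TT c i) = (\<Sum>i=3..N-1. AA c i - TT c i) + (AA c N - TT c N)"
  proof -
    obtain k where k: "N = Suc k" using N3 by (cases N) auto
    show ?thesis unfolding k using N3 k by (simp add: sum.cl_ivl_Suc)
  qed
  moreover have "0 \<le> AA c N - TT c N" using T_le_A[of N] N3 by simp
  moreover have "0 \<le> gg c N" using gg_nonneg[of N] N3 by simp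
  ultimately have "gg c N * (\<Sum>i=3..N-1. AA c i - TT c i) \<le> gg c N * (\<Sum>i=3..N. AA c i - TT c i)"
    by (intro mult_left_mono) auto
  hence "(1 - gg c N) * (\<Sum>i=3..N. AA c i - TT c i) \<le> AA c N"
    using F_sum_aux[of N] N3 by (simp add: algebra_simps)
  moreover have "0 < 1 - gg c N" using one_minus_gg[of N] s_pos[of N] N3 by simp
  ultimately show ?thesis by (simp add: le_divide_eq mult.commute)
qed

lemma ln_up: "2 \<le> j \<Longrightarrow> j \<le> N \<Longrightarrow> ln (uu c (j-1)) - ln (uu c j) \<le> 1/(c * uu c j)"
proof -
  assume j: "2 \<le> j" "j \<le> N"
  have p: "0 < uu c j" "0 < uu c (j-1)" using j u_pos by auto
  have "ln (uu c (j-1)) - ln (uu c j) = ln (uu c (j-1) / uu c j)" using p by (simp add: ln_div)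
  also have "... \<le> uu c (j-1) / uu c j - 1" using p by (intro ln_le_minus_one) simp
  also have "... = (uu c (j-1) - uu c j) / uu c j" using p by (simp add: field_simps)
  also have "... = 1/(c * uu c j)" using u_step[of j] j by simp
  finally show ?thesis .
qed

lemma ln_lo: "2 \<le> j \<Longrightarrow> j \<le> N \<Longrightarrow> 1/(c * uu c (j-1)) \<le> ln (uu c (j-1)) - ln (uu c j)"
proof -
  assume j: "2 \<le> j" "j \<le> N"
  have p: "0 < uu c j" "0 < uu c (j-1)" using j u_pos by auto
  have "ln (uu c j) - ln (uu c (j-1)) = ln (uu c j / uu c (j-1))" using p by (simp add: ln_div)
  also have "... \<le> uu c j / uu c (j-1) - 1" using p by (intro ln_le_minus_one) simp
  also have "... = (uu c j - uu c (j-1)) / uu c (j-1)" using p by (simp add: field_simps)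
  also have "... = - (1/(c * uu c (j-1)))" using u_step[of j] j by simp
  finally show ?thesis by simp
qed

lemma AA_sum_upper: "(\<Sum>j=3..N. AA c j) \<le> -(1/4) * ln (uu c N) + 1/(4*c*uu c N)"
proof -
  have "(\<Sum>j=3..N. AA c j) = (\<Sum>j=3..<N. AA c j) + AA c N"
    using N3 by (metis atLeastLessThanSuc_atLeastAtMost le_trans numeral_le_iff one_le_numeral sum.atLeastLessThan_Suc)
  also have "(\<Sum>j=3..<N. AA c j) \<le> (\<Sum>j=3..<N. (1/4)*ln (uu c j) - (1/4)*ln (uu c (Suc j)))"
  proof (rule sum_mono)
    fix j assume j: "j \<in> {3..<N}"
    have "AA c j \<le> 1/(4*c*uu c j)" using AA_upper[of j] j by auto
    also have "... = (1/4) * (1/(c * uu c (Suc j - 1)))" by simp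
    also have "... \<le> (1/4) * (ln (uu c (Suc j - 1)) - ln (uu c (Suc j)))"
      using ln_lo[of "Suc j"] j by (intro mult_left_mono) auto
    finally show "AA c j \<le> (1/4)*ln (uu c j) - (1/4)*ln (uu c (Suc j))" by (simp add: algebra_simps)
  qed
  also have "(\<Sum>j=3..<N. (1/4)*ln (uu c j) - (1/4)*ln (uu c (Suc j))) = (1/4)*ln (uu c 3) - (1/4)*ln (uu c N)"
    using tel3[of N "\<lambda>j. (1/4)*ln (uu c j)"] N3 by simp
  also have "ln (uu c 3) \<le> 0" using u_pos[of 3] u_le1[of 3] N3 by simp
  moreover have "AA c N \<le> 1/(4*c*uu c N)" using AA_upper[of N] N3 by simp
  ultimately show ?thesis by linarith
qed

lemma AA_sum_lower: "-(1/4) * ln (uu c (N-1)) - 1 \<le> (\<Sum>j=3..N. AA c j)"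
proof -
  have "(\<Sum>j=3..N. ((1/4)*ln (uu c (j-2)) - (1/4)*ln (uu c (j-1))) - (rs c (j-1) - rs c j)) \<le> (\<Sum>j=3..N. AA c j)"
  proof (rule sum_mono)
    fix j assume j: "j \<in> {3..N}"
    have h: "ln (uu c (j-1-1)) - ln (uu c (j-1)) \<le> 1/(c * uu c (j-1))"
      by (rule ln_up) (use j in auto)
    have "(1/4) * (ln (uu c (j-1-1)) - ln (uu c (j-1))) \<le> (1/4) * (1/(c * uu c (j-1)))"
      using h by (intro mult_left_mono) auto
    moreover have "j - 1 - 1 = j - 2" by simp
    ultimately have "(1/4)*ln (uu c (j-2)) - (1/4)*ln (uu c (j-1)) \<le> 1/(4*c*uu c (j-1))"
      by (simp add: algebra_simps)
    thus "((1/4)*ln (uu c (j-2)) - (1/4)*ln (uu c (j-1))) - (rs c (j-1) - rs c j) \<le> AA c j"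
      using AA_lower[of j] j by simp
  qed
  moreover have "(\<Sum>j=3..N. ((1/4)*ln (uu c (j-2)) - (1/4)*ln (uu c (j-1))) - (rs c (j-1) - rs c j))
     = ((1/4)*ln (uu c 1) - (1/4)*ln (uu c (N-1))) - (rs c 2 - rs c N)"
    using tel1[of N "\<lambda>j. (1/4)*ln (uu c j)"] tel2[of N "rs c"] N3 by (simp add: sum_subtractf)
  moreover have "uu c 1 = 1" unfolding uu_def by simp
  moreover have "rs c 2 \<le> 1" "0 < rs c N" using s_le1[of 2] s_pos[of N] by auto
  ultimately show ?thesis by simp
qed

lemma main_bounds:
  "-(1/4) * ln (uu c (N-1)) - 1 - 1/(4*c*uu c N * rs c N) \<le> (\<Sum>i=3..N. TT c i)"
  "(\<Sum>i=3..N. TT c i) \<le> -(1/4) * ln (uu c N) + 1/(4*c*uu c N)"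
proof -
  have e: "(\<Sum>i=3..N. TT c i) = (\<Sum>i=3..N. AA c i) - (\<Sum>i=3..N. AA c i - TT c i)"
    by (simp add: sum_subtractf)
  have "0 \<le> (\<Sum>i=3..N. AA c i - TT c i)" using T_le_A by (intro sum_nonneg) auto
  thus "(\<Sum>i=3..N. TT c i) \<le> -(1/4) * ln (uu c N) + 1/(4*c*uu c N)"
    using e AA_sum_upper by linarith
  have p: "0 < rs c N" "0 \<le> AA c N" using s_pos[of N] AA_nonneg[of N] N3 by auto
  have "AA c N / (1 - gg c N) \<le> AA c N / rs c N"
    using p one_minus_gg[of N] N3 by (intro divide_left_mono) auto
  also have "... \<le> (1/(4*c*uu c N)) / rs c N"
    using p AA_upper[of N] N3 by (intro divide_right_mono) auto
  also have "... = 1/(4*c*uu c N * rs c N)" by simp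
  finally show "-(1/4) * ln (uu c (N-1)) - 1 - 1/(4*c*uu c N * rs c N) \<le> (\<Sum>i=3..N. TT c i)"
    using e F_sum AA_sum_lower by linarith
qed

end


lemma Tdelta_eq: "Tdelta w N i = TT (real N * (theta w N)^2) i"
  unfolding Tdelta_def TT_def gam_def delta_def gg_def dd_def mm_def rr_def rs_def uu_def by simp

lemma asym:
  fixes N :: nat and w :: real
  assumes N: "6^6 \<le> N" and w1: "1 \<le> w" and wl: "w \<le> (ln (real N))^2"
  shows "\<bar>(\<Sum>i=3..N. TT (real N * (1 + real N powr (-2/3) * w)^2) i) - ln (real N)/6\<bar>
           \<le> 3 + ln (ln (real N))/2"
proof -
  define c where "c = real N * (1 + real N powr (-2/3) * w)^2"
  define q where "q = real N powr (1/6)"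
  define t where "t = real N powr (-2/3) * w"
  have Npos: "0 < real N" using N by simp
  have qpos: "0 < q" unfolding q_def using Npos by simp
  have q6: "q^6 = real N" unfolding q_def using Npos by (simp add: powr_power)
  have q4: "real N powr (-2/3) = 1/q^4"
  proof -
    have "q^4 = real N powr (2/3)" unfolding q_def using Npos by (simp add: powr_power)
    moreover have "real N powr (-2/3) = 1 / real N powr (2/3)" by (simp add: powr_minus_divide)
    ultimately show ?thesis by simp
  qed
  have q_ge: "6 \<le> q"
  proof (rule power_le_imp_le_base[of _ 5])
    have "real (6^6) \<le> real N" using N by (simp only: of_nat_le_iff)
    thus "(6::real)^Suc 5 \<le> q^Suc 5" using q6 by simp
  qed (use qpos in simp)
  have lnN: "ln (real N) = 6 * ln q" using q6 qpos by (metis ln_realpow of_nat_numeral)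
  have lnq: "ln q \<le> q" using ln_le_minus_one[OF qpos] by simp
  have lnq0: "0 \<le> ln q" using q_ge by simp
  have "(ln (real N))^2 \<le> 36 * q^2" unfolding lnN using lnq lnq0 by (simp add: power_mult_distrib power_mono)
  also have "... \<le> q^2 * q^2"
  proof (rule mult_right_mono)
    have "6*6 \<le> q*q" using q_ge by (intro mult_mono) auto
    thus "36 \<le> q^2" by (simp add: power2_eq_square)
  qed simp
  finally have lnN2: "(ln (real N))^2 \<le> q^4" by (simp add: power_add[symmetric])
  have t_def': "t = w / q^4" unfolding t_def q4 by simp
  have tpos: "0 < t" unfolding t_def' using w1 qpos by simp
  have t1: "t \<le> 1" unfolding t_def' using w1 wl lnN2 qpos by simp
  define a where "a = real N * t"
  have a_def': "a = q^2 * w" unfolding a_def t_def' q6[symmetric] using qpos by (simp add: field_simps)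
  have "1 \<le> q^2" using q_ge by (simp add: one_le_power)
  hence a1: "1 \<le> a" unfolding a_def' using w1 mult_mono[of 1 "q^2" 1 w] by simp
  have N3: "3 \<le> N" using N by simp
  have c_t: "c = real N * (1+t)^2" unfolding c_def t_def by simp
  have sq1: "1 \<le> (1+t)^2" using tpos by (simp add: one_le_power)
  have sq4: "(1+t)^2 \<le> 4" using tpos t1 power_mono[of "1+t" 2 2] by simp
  have cN: "real N \<le> c" unfolding c_t using sq1 Npos mult_left_mono[of 1 "(1+t)^2" "real N"] by simp
  have c4: "c \<le> 4 * real N" unfolding c_t using sq4 Npos mult_left_mono[of "(1+t)^2" 4 "real N"] by (simp add: mult.commute)
  have cpos: "0 < c" using cN Npos by linarith
  define X where "X = c * uu c N"
  have X_eq: "X = a * (2 + t) + 1"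
  proof -
    have "X = c - (real N - 1)" unfolding X_def uu_def using cpos by (simp add: field_simps)
    also have "... = a * (2 + t) + 1" unfolding c_t a_def by (simp add: power2_eq_square algebra_simps)
    finally show ?thesis .
  qed
  have X_lo: "2 * a + 1 \<le> X" unfolding X_eq using a1 tpos by (simp add: algebra_simps)
  have X_hi: "X \<le> 3 * a + 1" unfolding X_eq using a1 t1 mult_left_mono[of t 1 a] by (simp add: algebra_simps)
  define e where "e = uu c N"
  have e_eq: "e = X / c" unfolding X_def e_def using cpos by simp
  have e_lo: "t / 2 \<le> e"
  proof -
    have "t / 2 * c \<le> t / 2 * (4 * real N)" using c4 tpos by (intro mult_left_mono) auto
    also have "... = 2 * a" unfolding a_def by simp
    also have "... \<le> X" using X_lo by simp
    finally show ?thesis unfolding e_eq using cpos by (simp add: le_divide_eq)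
  qed
  have epos: "0 < e" using e_lo tpos by linarith
  have u1: "uu c (N-1) = (X + 1) / c"
    using u_step[OF N3 cN, of N] N3 cpos unfolding e_eq[unfolded e_def] by (simp add: add_divide_distrib)
  have u1_hi: "uu c (N-1) \<le> 5 * t"
  proof -
    have "(X + 1) / c \<le> (X + 1) / real N" using cN Npos X_lo a1 by (intro divide_left_mono) auto
    also have "... \<le> (5 * a) / real N" using X_hi a1 Npos by (intro divide_right_mono) auto
    also have "... = 5 * t" unfolding a_def using Npos by simp
    finally show ?thesis unfolding u1 .
  qed
  have u1pos: "0 < uu c (N-1)" using u_pos[OF N3 cN, of "N-1"] by simp
  have lnt: "ln t = ln w - (2/3) * ln (real N)"
  proof -
    have "ln t = ln w - ln (q^4)" unfolding t_def' using w1 qpos by (simp add: ln_div)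
    also have "ln (q^4) = 4 * ln q" using qpos by (simp add: ln_realpow)
    finally show ?thesis unfolding lnN by simp
  qed
  have lnw0: "0 \<le> ln w" using w1 by simp
  have lnN0: "0 < ln (real N)" using N by simp
  have lnw_hi: "ln w \<le> 2 * ln (ln (real N))"
  proof -
    have "ln w \<le> ln ((ln (real N))^2)" using w1 wl by (subst ln_le_cancel_iff) auto
    also have "... = 2 * ln (ln (real N))" using lnN0 by (simp add: ln_realpow)
    finally show ?thesis .
  qed
  have ln5: "ln (5::real) \<le> 4" using ln_le_minus_one[of 5] by simp
  have ln2: "ln (2::real) \<le> 1" using ln_le_minus_one[of 2] by simp
  have lne: "ln (t/2) \<le> ln e" using e_lo tpos by simp
  have lnt2: "ln (t/2) = ln t - ln 2" using tpos by (simp add: ln_div)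
  have lnu1: "ln (uu c (N-1)) \<le> ln (5 * t)" using u1_hi u1pos by simp
  have ln5t: "ln (5 * t) = ln 5 + ln t" using tpos by (simp add: ln_mult)
  have err1: "1/(4*c*uu c N) \<le> 1/4"
  proof -
    have "4*c*uu c N = 4 * X" unfolding X_def by simp
    moreover have "1 \<le> X" using X_lo a1 by simp
    ultimately show ?thesis by simp
  qed
  have err2: "1/(4*c*uu c N * rs c N) \<le> 1/4"
  proof -
    have "2 * (a^2 * t) \<le> X^2 * e"
    proof -
      have "2 * (a^2 * t) = (2*a)^2 * (t/2)" by (simp add: power2_eq_square)
      also have "... \<le> X^2 * e" using X_lo e_lo a1 tpos
        by (intro mult_mono power_mono) auto
      finally show ?thesis .
    qed
    moreover have "a^2 * t = w^3" unfolding a_def' t_def' using qpos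
      by (simp add: power2_eq_square power3_eq_cube field_simps power4_eq_xxxx)
    moreover have "1 \<le> w^3" using w1 by (simp add: one_le_power)
    ultimately have "1 \<le> X^2 * e" by linarith
    hence "1 \<le> sqrt (X^2 * e)" by simp
    also have "sqrt (X^2 * e) = X * rs c N" unfolding rs_def e_def[symmetric] using X_lo a1
      by (simp add: real_sqrt_mult)
    finally have h: "1 \<le> X * rs c N" .
    have e4: "4*c*uu c N * rs c N = 4 * (X * rs c N)" unfolding X_def by simp
    have "1/(4 * (X * rs c N)) \<le> 1/4" using h by (intro divide_left_mono) auto
    thus ?thesis unfolding e4 .
  qed
  note MB = main_bounds[OF N3 cN]
  have S_def': "(\<Sum>i=3..N. TT (real N * (1 + real N powr (-2/3) * w)^2) i) = (\<Sum>i=3..N. TT c i)"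
    unfolding c_def ..
  show ?thesis unfolding S_def'
    using MB(1) MB(2) err1 err2 lnt lnw0 lnw_hi ln5 ln2 lne lnt2 lnu1 ln5t unfolding e_def
    by (simp add: abs_le_iff)
qed


lemma lnln_ge1:
  fixes N :: nat assumes N: "6^6 \<le> N" shows "1 \<le> ln (ln (real N))"
proof -
  have "exp (3::real) = exp 1 * exp 1 * exp 1" by (simp flip: exp_add)
  also have "... \<le> 3 * 3 * 3" using exp_le by (intro mult_mono) auto
  also have "... \<le> real N" using N by simp
  finally have e3: "exp 3 \<le> real N" .
  have "3 \<le> ln (real N)" using e3 N by (subst ln_ge_iff) auto
  hence h: "exp 1 \<le> ln (real N)" "0 < ln (real N)" using exp_le by linarith+
  show ?thesis using h by (subst ln_ge_iff) auto
qed

theorem lemma11: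
  fixes w :: "nat \<Rightarrow> real"
  assumes "\<And>N. w N > 0"
    and "((\<lambda>N. (ln (ln (real N)))^2 / w N) \<longlongrightarrow> 0) at_top"
    and "((\<lambda>N. w N / (ln (real N))^2) \<longlongrightarrow> 0) at_top"
  shows "(\<lambda>N. (\<Sum>i=3..N. Tdelta w N i) - ln (real N) / 6) \<in> O(\<lambda>N. ln (ln (real N)))"
proof -
  have ev1: "eventually (\<lambda>N. (ln (ln (real N)))^2 / w N < 1) at_top"
    using order_tendstoD(2)[OF assms(2)] by simp
  have ev2: "eventually (\<lambda>N. w N / (ln (real N))^2 < 1) at_top"
    using order_tendstoD(2)[OF assms(3)] by simp
  have ev3: "eventually (\<lambda>N::nat. 6^6 \<le> N) at_top" by (rule eventually_ge_at_top)
  have "eventually (\<lambda>N. norm ((\<Sum>i=3..N. Tdelta w N i) - ln (real N) / 6) \<le> 4 * norm (ln (ln (real N)))) at_top"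
    using ev1 ev2 ev3
  proof eventually_elim
    case (elim N)
    have L: "1 \<le> ln (ln (real N))" using lnln_ge1 elim(3) by simp
    have wp: "0 < w N" using assms(1) by simp
    have "(ln (ln (real N)))^2 < w N" using elim(1) wp by (simp add: divide_less_eq)
    moreover have "1 \<le> (ln (ln (real N)))^2" using L by (simp add: one_le_power)
    ultimately have w1: "1 \<le> w N" by linarith
    have lp: "0 < (ln (real N))^2" using elim(3) by simp
    have wl: "w N \<le> (ln (real N))^2" using elim(2) lp by (simp add: divide_less_eq)
    have A: "\<bar>(\<Sum>i=3..N. TT (real N * (1 + real N powr (-2/3) * w N)^2) i) - ln (real N)/6\<bar>
           \<le> 3 + ln (ln (real N))/2" by (rule asym[OF elim(3) w1 wl])
    have "(\<Sum>i=3..N. Tdelta w N i) = (\<Sum>i=3..N. TT (real N * (1 + real N powr (-2/3) * w N)^2) i)"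
      by (simp add: Tdelta_eq theta_def)
    thus ?case using A L by simp
  qed
  thus ?thesis by (rule bigoI)
qed

end
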